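(* Let $2 \le t < k < v$ and let $(X,\mathcal{B})$ be a $t$-$(v,k,1)$-design. Let $B = \{x_1,\dots,x_k\} \in \mathcal{B}$. Then the cutsets for $B$ are exactly the sets $\mathcal{C}_1,\dots,\mathcal{C}_k$, where $\mathcal{C}_j = \{B' \in \mathcal{B}\setminus\{B\} : x_j \in B'\}$.
   Context: A $t$-$(v,k,\lambda)$-design is a set $X$ of $v$ points together with a collection $\mathcal{B}$ of $k$-subsets of $X$ (blocks) such that every $t$-subset of $X$ lies in exactly $\lambda$ blocks. For a fixed block $B$, a repair set for $B$ is a subset $\mathcal{P}\subseteq \mathcal{B}\setminus\{B\}$ with $B \subseteq \bigcup_{B'\in\mathcal{P}} B'$. Each block of $\mathcal{B}\setminus\{B\}$ is either available or not; a repair set is available if all its blocks are available. A cutset for $B$ is a subset $\mathcal{B}'\subseteq\mathcal{B}\setminus\{B\}$, minimal with respect to inclusion, such that if every block in $\mathcal{B}'$ is unavailable then no available repair set for $B$ exists (i.e., $(\mathcal{B}\setminus\{B\})\setminus\mathcal{B}'$ contains no repair set for $B$). *)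

theory Defs
  imports Main
begin

definition t_design :: "'a set \<Rightarrow> 'a set set \<Rightarrow> nat \<Rightarrow> nat \<Rightarrow> nat \<Rightarrow> nat \<Rightarrow> bool" where
  "t_design X \<B> t v k lam \<longleftrightarrow>
     finite X \<and> card X = v \<and>
     (\<forall>B\<in>\<B>. B \<subseteq> X \<and> card B = k) \<and>
     (\<forall>T. T \<subseteq> X \<and> card T = t \<longrightarrow> card {B\<in>\<B>. T \<subseteq> B} = lam)"

definition repair_set :: "'a set set \<Rightarrow> 'a set \<Rightarrow> 'a set set \<Rightarrow> bool" where
  "repair_set \<B> B \<P> \<longleftrightarrow> \<P> \<subseteq> \<B> - {B} \<and> B \<subseteq> \<Union>\<P>"

definition cutset :: "'a set set \<Rightarrow> 'a set \<Rightarrow> 'a set set \<Rightarrow> bool" where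
  "cutset \<B> B \<C> \<longleftrightarrow>
     \<C> \<subseteq> \<B> - {B} \<and>
     \<not> (\<exists>\<P>. repair_set \<B> B \<P> \<and> \<P> \<subseteq> (\<B> - {B}) - \<C>) \<and>
     (\<forall>\<C>'. \<C>' \<subset> \<C> \<longrightarrow> (\<exists>\<P>. repair_set \<B> B \<P> \<and> \<P> \<subseteq> (\<B> - {B}) - \<C>'))"

end

theory Submission
  imports Defs
begin

lemma key:
  assumes d: "t_design X Bs t v k 1" and BB: "B \<in> Bs"
    and x: "x \<in> B" and y: "y \<in> B" and xy: "x \<noteq> y"
    and "2 \<le> t" "t < k" "k < v"
  shows "\<exists>B'\<in>Bs. B' \<noteq> B \<and> y \<in> B' \<and> x \<notin> B'"
proof -
  have fX: "finite X" and cX: "card X = v" and BX: "B \<subseteq> X" and cB: "card B = k"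
    and des: "\<And>T. T \<subseteq> X \<Longrightarrow> card T = t \<Longrightarrow> card {B\<in>Bs. T \<subseteq> B} = 1"
    and blk: "\<And>B. B \<in> Bs \<Longrightarrow> B \<subseteq> X"
    using d BB unfolding t_design_def by auto
  have fB: "finite B" using fX BX finite_subset by blast
  have "B \<noteq> X" using cB cX \<open>k < v\<close> by auto
  then obtain z where z: "z \<in> X" "z \<notin> B" using BX by blast
  have cBxy: "card (B - {x,y}) = k - 2" using x y xy cB fB by (simp add: card_Diff_subset)
  have "t - 2 \<le> card (B - {x,y})" using cBxy \<open>t < k\<close> by simp
  then obtain S where S: "S \<subseteq> B - {x,y}" "card S = t - 2" "finite S"
    by (rule obtain_subset_with_card_n)
  define T where "T = insert y (insert z S)"
  have "y \<notin> S" "z \<notin> S" "y \<noteq> z" using S z y by auto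
  hence cT: "card T = t" unfolding T_def using S \<open>2 \<le> t\<close> by simp
  have TX: "T \<subseteq> X" unfolding T_def using S z y BX by auto
  have "card {B\<in>Bs. T \<subseteq> B} = 1" using des[OF TX cT] .
  then obtain B' where "{B\<in>Bs. T \<subseteq> B} = {B'}" by (rule card_1_singletonE)
  hence B': "B' \<in> Bs" "T \<subseteq> B'" by auto
  have ne: "B' \<noteq> B" using B' z unfolding T_def by auto
  have "x \<notin> B'"
  proof
    assume xB': "x \<in> B'"
    define T2 where "T2 = insert x (insert y S)"
    have "x \<notin> S" "y \<notin> S" using S by auto
    hence cT2: "card T2 = t" unfolding T2_def using S xy \<open>2 \<le> t\<close> by simp
    have T2X: "T2 \<subseteq> X" unfolding T2_def using S x y BX by auto
    have "card {B\<in>Bs. T2 \<subseteq> B} = 1" using des[OF T2X cT2] .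
    then obtain B2 where e: "{B\<in>Bs. T2 \<subseteq> B} = {B2}" by (rule card_1_singletonE)
    have "B \<in> {B\<in>Bs. T2 \<subseteq> B}" unfolding T2_def using BB S x y by auto
    moreover have "B' \<in> {B\<in>Bs. T2 \<subseteq> B}" unfolding T2_def using B' xB' unfolding T_def by auto
    ultimately show False using e ne by auto
  qed
  thus ?thesis using B' ne unfolding T_def by auto
qed

lemma rep: "(\<exists>P. repair_set Bs B P \<and> P \<subseteq> (Bs - {B}) - C) \<longleftrightarrow> B \<subseteq> \<Union>((Bs - {B}) - C)"
proof
  assume "\<exists>P. repair_set Bs B P \<and> P \<subseteq> (Bs - {B}) - C"
  then obtain P where "repair_set Bs B P" "P \<subseteq> (Bs - {B}) - C" by blast
  thus "B \<subseteq> \<Union>((Bs - {B}) - C)" unfolding repair_set_def by blast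
next
  assume "B \<subseteq> \<Union>((Bs - {B}) - C)"
  hence "repair_set Bs B ((Bs - {B}) - C)" unfolding repair_set_def by blast
  thus "\<exists>P. repair_set Bs B P \<and> P \<subseteq> (Bs - {B}) - C" by blast
qed

theorem mainTheorem7:
  fixes X :: "'a set" and \<B> :: "'a set set" and B :: "'a set" and t v k :: nat
  assumes "2 \<le> t" and "t < k" and "k < v"
    and "t_design X \<B> t v k 1"
    and "B \<in> \<B>"
  shows "{\<C>. cutset \<B> B \<C>} = (\<lambda>x. {B' \<in> \<B> - {B}. x \<in> B'}) ` B"
proof -
  note K = key[OF assms(4,5) _ _ _ assms(1,2,3)]
  have cx: "cutset \<B> B {B' \<in> \<B> - {B}. x \<in> B'}" if x: "x \<in> B" for x
    unfolding cutset_def rep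
  proof (intro conjI allI impI)
    show "{B' \<in> \<B> - {B}. x \<in> B'} \<subseteq> \<B> - {B}" by auto
    show "\<not> B \<subseteq> \<Union> (\<B> - {B} - {B' \<in> \<B> - {B}. x \<in> B'})" using x by auto
  next
    fix C' assume C': "C' \<subset> {B' \<in> \<B> - {B}. x \<in> B'}"
    show "B \<subseteq> \<Union> (\<B> - {B} - C')"
    proof
      fix y assume y: "y \<in> B"
      show "y \<in> \<Union> (\<B> - {B} - C')"
      proof (cases "y = x")
        case True
        then show ?thesis using C' by blast
      next
        case False
        then obtain B' where "B' \<in> \<B>" "B' \<noteq> B" "y \<in> B'" "x \<notin> B'" using K[OF x y] by metis
        then show ?thesis using C' by blast
      qed
    qed
  qed
  show ?thesis
  proof (rule set_eqI, rule iffI)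
    fix C assume "C \<in> {\<C>. cutset \<B> B \<C>}"
    hence c: "cutset \<B> B C" by simp
    hence "\<not> B \<subseteq> \<Union>((\<B> - {B}) - C)" unfolding cutset_def rep by blast
    then obtain x where x: "x \<in> B" "x \<notin> \<Union>((\<B> - {B}) - C)" by blast
    have sub: "{B' \<in> \<B> - {B}. x \<in> B'} \<subseteq> C" using x by blast
    have "\<not> {B' \<in> \<B> - {B}. x \<in> B'} \<subset> C"
    proof
      assume "{B' \<in> \<B> - {B}. x \<in> B'} \<subset> C"
      hence "B \<subseteq> \<Union>((\<B> - {B}) - {B' \<in> \<B> - {B}. x \<in> B'})"
        using c unfolding cutset_def rep by blast
      thus False using x by blast
    qed
    hence "C = {B' \<in> \<B> - {B}. x \<in> B'}" using sub by blast
    thus "C \<in> (\<lambda>x. {B' \<in> \<B> - {B}. x \<in> B'}) ` B" using x by blast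
  next
    fix C assume "C \<in> (\<lambda>x. {B' \<in> \<B> - {B}. x \<in> B'}) ` B"
    thus "C \<in> {\<C>. cutset \<B> B \<C>}" using cx by blast
  qed
qed

end
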